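(* Consider a fair allocation instance with agents $a_1,\dots,a_n$, a finite set $M$ of $m$ indivisible goods, binary XOS valuations $v_1,\dots,v_n$, and entitlements $b_1,\dots,b_n>0$ with $\sum_{i}b_i=1$. Rename the agents so that $\frac{\lceil \mathsf{APS}_1/2\rceil}{b_1}\le \frac{\lceil \mathsf{APS}_2/2\rceil}{b_2}\le\cdots\le\frac{\lceil \mathsf{APS}_n/2\rceil}{b_n}$. Run the following procedure: set $R\gets M$; for $i=1,\dots,n$ in this order, if $v_i(R)\ge\lceil \mathsf{APS}_i/2\rceil$, give $a_i$ a bundle $A_i\subseteq R$ with $v_i(A_i)=|A_i|=\lceil \mathsf{APS}_i/2\rceil$ and set $R\gets R\setminus A_i$ (otherwise the procedure fails); finally allocate the goods remaining in $R$ arbitrarily. Then the procedure never fails, i.e. at every step $i$ such a bundle $A_i$ exists, and the resulting allocation $A$ of $M$ satisfies $v_i(A_i)\ge \frac12\mathsf{APS}_i$ for every agent $a_i$; in particular a $\frac12$-APS allocation always exists.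
   Context: A valuation $v:2^M\to\mathbb{R}_{\ge0}$ is XOS if there is a finite collection of additive functions $\{\ell_t\}_t$ with nonnegative item values such that $v(S)=\max_t\ell_t(S)$ for all $S\subseteq M$. It has binary marginals if $v(\varnothing)=0$ and $v(S\cup\{g\})-v(S)\in\{0,1\}$ for all $S\subseteq M$, $g\in M$; "binary XOS" means XOS with binary marginals. An allocation is a partition $(A_1,\dots,A_n)$ of $M$ with $A_i$ given to $a_i$. With $\mathcal{P}=\{p\in\mathbb{R}^m_{\ge0}:\sum_{g\in M}p_g=1\}$ and $p(S)=\sum_{g\in S}p_g$, the AnyPrice share of $a_i$ is $\mathsf{APS}_i=\min_{p\in\mathcal{P}}\max_{S\subseteq M,\ p(S)\le b_i}v_i(S)$. An allocation is $\alpha$-APS if $v_i(A_i)\ge\alpha\,\mathsf{APS}_i$ for all $i$. *)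

theory Defs
  imports Complex_Main
begin

definition additive_val :: "'g set \<Rightarrow> ('g \<Rightarrow> real) \<Rightarrow> ('g set \<Rightarrow> real)" where
  "additive_val M w = (\<lambda>S. \<Sum>g\<in>S. w g)"

definition is_XOS :: "'g set \<Rightarrow> ('g set \<Rightarrow> real) \<Rightarrow> bool" where
  "is_XOS M v \<longleftrightarrow> (\<exists>L :: ('g \<Rightarrow> real) set. finite L \<and> L \<noteq> {} \<and>
      (\<forall>w\<in>L. \<forall>g\<in>M. w g \<ge> 0) \<and>
      (\<forall>S. S \<subseteq> M \<longrightarrow> v S = Max ((\<lambda>w. additive_val M w S) ` L)))"

definition binary_marginals :: "'g set \<Rightarrow> ('g set \<Rightarrow> real) \<Rightarrow> bool" where
  "binary_marginals M v \<longleftrightarrow> v {} = 0 \<and>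
      (\<forall>S g. S \<subseteq> M \<longrightarrow> g \<in> M \<longrightarrow> v (S \<union> {g}) - v S \<in> {0, 1})"

definition binary_XOS :: "'g set \<Rightarrow> ('g set \<Rightarrow> real) \<Rightarrow> bool" where
  "binary_XOS M v \<longleftrightarrow> is_XOS M v \<and> binary_marginals M v"

definition price_vectors :: "'g set \<Rightarrow> ('g \<Rightarrow> real) set" where
  "price_vectors M = {p. (\<forall>g\<in>M. p g \<ge> 0) \<and> (\<Sum>g\<in>M. p g) = 1}"

text \<open>AnyPrice share: min over prices p of the max value of an affordable bundle.
  (The minimum is attained since the inner value ranges over a finite set; we write Inf.)\<close>
definition APS :: "'g set \<Rightarrow> ('g set \<Rightarrow> real) \<Rightarrow> real \<Rightarrow> real" where
  "APS M v b = Inf ((\<lambda>p. Max (v ` {S. S \<subseteq> M \<and> (\<Sum>g\<in>S. p g) \<le> b})) ` price_vectors M)"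

definition is_allocation :: "'g set \<Rightarrow> nat \<Rightarrow> (nat \<Rightarrow> 'g set) \<Rightarrow> bool" where
  "is_allocation M n A \<longleftrightarrow> (\<forall>i<n. A i \<subseteq> M) \<and>
      (\<forall>i<n. \<forall>j<n. i \<noteq> j \<longrightarrow> A i \<inter> A j = {}) \<and> (\<Union>i<n. A i) = M"

definition valid_step :: "'g set \<Rightarrow> (nat \<Rightarrow> 'g set \<Rightarrow> real) \<Rightarrow> (nat \<Rightarrow> real)
    \<Rightarrow> (nat \<Rightarrow> 'g set) \<Rightarrow> nat \<Rightarrow> bool" where
  "valid_step M v b A j \<longleftrightarrow> A j \<subseteq> M - (\<Union>k<j. A k) \<and>
      v j (A j) = real (card (A j)) \<and>
      real (card (A j)) = of_int \<lceil>APS M (v j) (b j) / 2\<rceil>"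

end

theory Submission
  imports Defs
begin

lemma bm_ind:
  assumes bm: "binary_marginals M v" and F: "finite F"
  shows "S \<subseteq> M \<Longrightarrow> F \<subseteq> M \<Longrightarrow> v S \<le> v (S \<union> F) \<and> v (S \<union> F) \<le> v S + card F \<and> v (S \<union> F) - v S \<in> \<int>"
  using F
proof (induction F)
  case empty
  then show ?case by simp
next
  case (insert x F)
  have e: "S \<union> insert x F = (S \<union> F) \<union> {x}" by auto
  have d: "v ((S \<union> F) \<union> {x}) - v (S \<union> F) \<in> {0,1}"
    using bm insert.prems unfolding binary_marginals_def by auto
  have IH: "v S \<le> v (S \<union> F) \<and> v (S \<union> F) \<le> v S + card F \<and> v (S \<union> F) - v S \<in> \<int>"
    using insert by auto
  have c: "card (insert x F) = card F + 1" using insert.hyps by simp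
  from d show ?case
  proof
    assume "v ((S \<union> F) \<union> {x}) - v (S \<union> F) = 0"
    then show ?thesis using IH e c by auto
  next
    assume "v ((S \<union> F) \<union> {x}) - v (S \<union> F) \<in> {1}"
    then have h: "v ((S \<union> F) \<union> {x}) = v (S \<union> F) + 1" by auto
    have "v (S \<union> F) - v S + 1 \<in> \<int>" using IH by (intro Ints_add) auto
    then show ?thesis using IH e c h by (auto simp: algebra_simps)
  qed
qed

lemma bm_mono:
  assumes "binary_marginals M v" "finite M" "S \<subseteq> T" "T \<subseteq> M"
  shows "v S \<le> v T"
proof -
  have "S \<union> (T - S) = T" using assms by auto
  moreover have "finite (T - S)" using assms finite_subset by blast
  ultimately show ?thesis using bm_ind[OF assms(1), of "T - S" S] assms by auto
qed

lemma bm_sub: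
  assumes "binary_marginals M v" "finite M" "S \<subseteq> T" "T \<subseteq> M"
  shows "v T \<le> v S + card (T - S)"
proof -
  have "S \<union> (T - S) = T" using assms by auto
  moreover have "finite (T - S)" using assms finite_subset by blast
  ultimately show ?thesis using bm_ind[OF assms(1), of "T - S" S] assms by auto
qed

lemma bm_int:
  assumes "binary_marginals M v" "finite M" "T \<subseteq> M"
  shows "v T \<in> \<int>"
proof -
  have "finite T" using assms finite_subset by blast
  then show ?thesis using bm_ind[OF assms(1), of T "{}"] assms
    by (auto simp: binary_marginals_def)
qed

lemma bm_nonneg:
  assumes "binary_marginals M v" "finite M" "T \<subseteq> M"
  shows "v T \<ge> 0"
  using bm_mono[OF assms(1,2), of "{}" T] assms by (auto simp: binary_marginals_def)

lemma bm_card: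
  assumes "binary_marginals M v" "finite M" "T \<subseteq> M"
  shows "v T \<le> card T"
  using bm_sub[OF assms(1,2), of "{}" T] assms by (auto simp: binary_marginals_def)

lemma xos_sub:
  assumes fin: "finite M" and bx: "binary_XOS M v" and RM: "R \<subseteq> M" and cR: "real c \<le> v R"
  shows "\<exists>T \<subseteq> R. v T = real (card T) \<and> card T = c"
proof -
  have bm: "binary_marginals M v" using bx by (simp add: binary_XOS_def)
  obtain L where L: "finite L" "L \<noteq> {}" "\<forall>w\<in>L. \<forall>g\<in>M. w g \<ge> 0"
    "\<forall>S. S \<subseteq> M \<longrightarrow> v S = Max ((\<lambda>w. additive_val M w S) ` L)"
    using bx by (auto simp: binary_XOS_def is_XOS_def)
  have wle: "\<And>w S. w \<in> L \<Longrightarrow> S \<subseteq> M \<Longrightarrow> sum w S \<le> v S"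
    using L by (auto simp: additive_val_def)
  obtain T where T: "T \<subseteq> R \<and> v T = v R" and Tmin: "\<forall>T'. T' \<subseteq> R \<and> v T' = v R \<longrightarrow> card T \<le> card T'"
    using ex_has_least_nat[of "\<lambda>T. T \<subseteq> R \<and> v T = v R" R card] by (auto simp only: order_refl)
  have TM: "T \<subseteq> M" using T RM by auto
  have finT: "finite T" using TM fin finite_subset by blast
  have drop: "v (T - {g}) = v T - 1" if g: "g \<in> T" for g
  proof -
    have "card (T - {g}) < card T" using g finT by (meson card_Diff1_less)
    moreover have "T - {g} \<subseteq> R" using T by blast
    ultimately have ne: "v (T - {g}) \<noteq> v T" using Tmin T by (metis leD)
    have "(T - {g}) \<union> {g} = T" using g by auto
    moreover have "v ((T - {g}) \<union> {g}) - v (T - {g}) \<in> {0,1}"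
    proof -
      have "\<forall>S g. S \<subseteq> M \<longrightarrow> g \<in> M \<longrightarrow> v (S \<union> {g}) - v S \<in> {0, 1}"
        using bm unfolding binary_marginals_def by blast
      moreover have "T - {g} \<subseteq> M" "g \<in> M" using TM g by auto
      ultimately show ?thesis by blast
    qed
    ultimately show ?thesis using ne by auto
  qed
  have "v T = Max ((\<lambda>w. additive_val M w T) ` L)" using L(4) TM by blast
  moreover have "Max ((\<lambda>w. additive_val M w T) ` L) \<in> (\<lambda>w. additive_val M w T) ` L"
    using L(1,2) by (intro Max_in) auto
  ultimately have "v T \<in> (\<lambda>w. additive_val M w T) ` L" by simp
  then obtain w where w: "w \<in> L" "v T = sum w T" by (auto simp: additive_val_def)
  have w1: "w g \<ge> 1" if "g \<in> T" for g
  proof -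
    have "sum w T = w g + sum w (T - {g})" using that finT by (simp add: sum.remove)
    moreover have "sum w (T - {g}) \<le> v (T - {g})" by (intro wle[OF w(1)]) (use TM in auto)
    moreover have "v (T - {g}) = v T - 1" using drop that by blast
    ultimately show ?thesis using w(2) by linarith
  qed
  have "sum w T \<ge> card T" using sum_mono[of T "\<lambda>_. 1" w] w1 by simp
  moreover have "v T \<le> card T" using bm_card[OF bm fin TM] .
  ultimately have "real (card T) \<ge> c" using cR T w by linarith
  then obtain T' where T': "T' \<subseteq> T" "card T' = c" "finite T'"
    using obtain_subset_with_card_n[of c T] by auto
  have "sum w T' \<ge> card T'" using sum_mono[of T' "\<lambda>_. 1" w] w1 T' by auto
  moreover have "sum w T' \<le> v T'" by (intro wle[OF w(1)]) (use TM T' in auto)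
  moreover have "v T' \<le> card T'" using bm_card[OF bm fin] TM T' by auto
  ultimately show ?thesis using T' T by (intro exI[of _ T']) auto
qed


lemma aps_le:
  assumes fin: "finite M" and bm: "binary_marginals M v" and bnn: "b \<ge> 0"
    and p: "p \<in> price_vectors M"
    and bound: "\<And>S. S \<subseteq> M \<Longrightarrow> sum p S \<le> b \<Longrightarrow> v S \<le> K"
  shows "APS M v b \<le> K"
proof -
  let ?f = "\<lambda>p. Max (v ` {S. S \<subseteq> M \<and> (\<Sum>g\<in>S. p g) \<le> b})"
  have fin2: "finite {S. S \<subseteq> M \<and> (\<Sum>g\<in>S. q g) \<le> b}" for q
    using fin by (rule finite_subset[rotated, OF finite_Pow_iff[THEN iffD2]]) auto
  have mem: "{} \<in> {S. S \<subseteq> M \<and> (\<Sum>g\<in>S. q g) \<le> b}" for q using bnn by simp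
  have f0: "?f q \<ge> 0" for q
  proof -
    have "v {} \<le> ?f q" using fin2 mem by (intro Max_ge) auto
    then show ?thesis using bm by (simp add: binary_marginals_def)
  qed
  have "APS M v b \<le> ?f p" unfolding APS_def
    by (rule cInf_lower) (use p f0 in \<open>auto intro: bdd_belowI[of _ 0]\<close>)
  also have "?f p \<le> K" using fin2 mem bound by (subst Max_le_iff) auto
  finally show ?thesis .
qed

lemma aps_nonneg:
  assumes fin: "finite M" and ne: "M \<noteq> {}" and bm: "binary_marginals M v" and bnn: "b \<ge> 0"
  shows "APS M v b \<ge> 0"
proof -
  let ?f = "\<lambda>p. Max (v ` {S. S \<subseteq> M \<and> (\<Sum>g\<in>S. p g) \<le> b})"
  have fin2: "finite {S. S \<subseteq> M \<and> (\<Sum>g\<in>S. q g) \<le> b}" for q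
    using fin by (rule finite_subset[rotated, OF finite_Pow_iff[THEN iffD2]]) auto
  have mem: "{} \<in> {S. S \<subseteq> M \<and> (\<Sum>g\<in>S. q g) \<le> b}" for q using bnn by simp
  have f0: "?f q \<ge> 0" for q
  proof -
    have "v {} \<le> ?f q" using fin2 mem by (intro Max_ge) auto
    then show ?thesis using bm by (simp add: binary_marginals_def)
  qed
  have "(\<lambda>g. 1 / real (card M)) \<in> price_vectors M"
    using fin ne by (simp add: price_vectors_def)
  then show ?thesis unfolding APS_def
    by (intro cInf_greatest) (use f0 in auto)
qed

theorem theorem1:
  fixes M :: "'g set" and n :: nat
    and v :: "nat \<Rightarrow> 'g set \<Rightarrow> real" and b :: "nat \<Rightarrow> real"
  assumes finM: "finite M" and neM: "M \<noteq> {}"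
    and val: "\<forall>i<n. binary_XOS M (v i)"
    and bpos: "\<forall>i<n. b i > 0" and bsum: "(\<Sum>i<n. b i) = 1"
    and sorted: "\<forall>i j. i \<le> j \<longrightarrow> j < n \<longrightarrow>
        of_int \<lceil>APS M (v i) (b i) / 2\<rceil> / b i \<le> of_int \<lceil>APS M (v j) (b j) / 2\<rceil> / b j"
  shows "(\<forall>i<n. \<forall>A. (\<forall>j<i. valid_step M v b A j) \<longrightarrow>
            (\<exists>Ai. Ai \<subseteq> M - (\<Union>j<i. A j) \<and> v i Ai = real (card Ai) \<and>
                  real (card Ai) = of_int \<lceil>APS M (v i) (b i) / 2\<rceil>))
       \<and> (\<forall>A B. (\<forall>j<n. valid_step M v b A j) \<and> is_allocation M n B \<and> (\<forall>i<n. A i \<subseteq> B i)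
            \<longrightarrow> (\<forall>i<n. v i (B i) \<ge> APS M (v i) (b i) / 2))
       \<and> (\<exists>B. is_allocation M n B \<and> (\<forall>i<n. v i (B i) \<ge> APS M (v i) (b i) / 2))"
proof -
  define cc where "cc i = \<lceil>APS M (v i) (b i) / 2\<rceil>" for i
  have bm: "binary_marginals M (v i)" if "i < n" for i
    using val that by (simp add: binary_XOS_def)
  have cc0: "cc i \<ge> 0" if "i < n" for i
  proof -
    have "APS M (v i) (b i) \<ge> 0" using aps_nonneg[OF finM neM bm[OF that]] bpos that by auto
    then show ?thesis unfolding cc_def by simp
  qed
  have part1: "\<forall>i<n. \<forall>A. (\<forall>j<i. valid_step M v b A j) \<longrightarrow>
            (\<exists>Ai. Ai \<subseteq> M - (\<Union>j<i. A j) \<and> v i Ai = real (card Ai) \<and>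
                  real (card Ai) = of_int \<lceil>APS M (v i) (b i) / 2\<rceil>)"
  proof (intro allI impI)
    fix i A assume i: "i < n" and vs: "\<forall>j<i. valid_step M v b A j"
    define X where "X = (\<Union>j<i. A j)"
    define R where "R = M - X"
    define c where "c = cc i"
    have bmi: "binary_marginals M (v i)" using bm i by simp
    have bi: "b i > 0" using bpos i by simp
    have AjM: "A j \<subseteq> M" if "j < i" for j using vs that by (auto simp: valid_step_def)
    have XM: "X \<subseteq> M" unfolding X_def using AjM by auto
    have finX: "finite X" using XM finM finite_subset by blast
    have RM: "R \<subseteq> M" unfolding R_def by auto
    have key: "real_of_int c \<le> v i R"
    proof (rule ccontr)
      assume neg: "\<not> real_of_int c \<le> v i R"
      have "v i R \<in> \<int>" using bm_int[OF bmi finM RM] .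
      then obtain k where k: "v i R = of_int k" by (auto elim: Ints_cases)
      have kc: "k \<le> c - 1" using neg k by linarith
      have k0: "k \<ge> 0" using bm_nonneg[OF bmi finM RM] k by simp
      have c1: "c \<ge> 1" using kc k0 by simp
      have cardX: "b i * real (card X) < of_int c"
      proof -
        have "card X \<le> (\<Sum>j<i. card (A j))" unfolding X_def by (rule card_UN_le) simp
        then have "real (card X) \<le> (\<Sum>j<i. real (card (A j)))"
          by (metis of_nat_le_iff of_nat_sum)
        also have "\<dots> = (\<Sum>j<i. real_of_int (cc j))"
          using vs by (intro sum.cong) (auto simp: valid_step_def cc_def)
        also have "\<dots> \<le> (\<Sum>j<i. (of_int c / b i) * b j)"
        proof (rule sum_mono)
          fix j assume "j \<in> {..<i}"
          then have j: "j < i" by simp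
          have bj: "b j > 0" using bpos j i by simp
          have "of_int (cc j) / b j \<le> of_int c / b i"
            using sorted j i unfolding cc_def c_def by auto
          then show "real_of_int (cc j) \<le> (of_int c / b i) * b j"
            using bj by (simp add: pos_divide_le_eq)
        qed
        also have "\<dots> = (of_int c / b i) * (\<Sum>j<i. b j)" by (simp add: sum_distrib_left)
        also have "\<dots> \<le> (of_int c / b i) * (1 - b i)"
        proof -
          have "(\<Sum>j<Suc i. b j) \<le> (\<Sum>j<n. b j)"
            using i bpos by (intro sum_mono2) auto
          then have "(\<Sum>j<i. b j) \<le> 1 - b i" using bsum by simp
          moreover have "of_int c / b i \<ge> 0" using c1 bi by simp
          ultimately show ?thesis by (rule mult_left_mono)
        qed
        finally have "real (card X) \<le> of_int c / b i * (1 - b i)" .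
        then have "b i * real (card X) \<le> b i * (of_int c / b i * (1 - b i))"
          using bi by (intro mult_left_mono) auto
        also have "\<dots> = of_int c - of_int c * b i" using bi by (simp add: field_simps)
        also have "\<dots> < of_int c" using bi c1 by simp
        finally show ?thesis .
      qed
      have bound: "APS M (v i) (b i) \<le> of_int k + of_int c - 1"
      proof (cases "X = {}")
        case True
        have p: "(\<lambda>g. 1 / real (card M)) \<in> price_vectors M"
          using finM neM by (simp add: price_vectors_def)
        show ?thesis
        proof (rule aps_le[OF finM bmi _ p])
          show "0 \<le> b i" using bi by simp
          fix S assume "S \<subseteq> M"
          then have "v i S \<le> v i R" using bm_mono[OF bmi finM] True R_def by simp
          then show "v i S \<le> of_int k + of_int c - 1" using k c1 by simp
        qed
      next
        case False
        define p where "p g = (if g \<in> X then 1 / real (card X) else 0)" for g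
        have cX: "card X > 0" using False finX by (simp add: card_gt_0_iff)
        have sumS: "sum p S = real (card (S \<inter> X)) / real (card X)" if "finite S" for S
        proof -
          have "sum p S = sum p (S \<inter> X) + sum p (S - X)" using that by (metis sum.Int_Diff)
          also have "sum p (S - X) = 0" unfolding p_def by (intro sum.neutral) auto
          also have "sum p (S \<inter> X) = (\<Sum>g\<in>S \<inter> X. 1 / real (card X))"
            unfolding p_def by (intro sum.cong) auto
          finally show ?thesis by simp
        qed
        have pp: "p \<in> price_vectors M"
          unfolding price_vectors_def using sumS[OF finM] XM cX
          by (auto simp: p_def Int_absorb1 Int_commute)
        show ?thesis
        proof (rule aps_le[OF finM bmi _ pp])
          show "0 \<le> b i" using bi by simp
          fix S assume SM: "S \<subseteq> M" and aff: "sum p S \<le> b i"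
          have finS: "finite S" using SM finM finite_subset by blast
          have "real (card (S \<inter> X)) \<le> b i * real (card X)"
            using aff sumS[OF finS] cX by (simp add: divide_le_eq mult.commute)
          then have "real (card (S \<inter> X)) < of_int c" using cardX by linarith
          then have "real_of_int (int (card (S \<inter> X))) < real_of_int c" by simp
          then have "int (card (S \<inter> X)) < c" by (simp only: of_int_less_iff)
          then have "int (card (S \<inter> X)) \<le> c - 1" by simp
          then have "real_of_int (int (card (S \<inter> X))) \<le> real_of_int (c - 1)" by (simp only: of_int_le_iff)
          then have cS: "real (card (S \<inter> X)) \<le> of_int c - 1" by simp
          have "v i S \<le> v i (S \<inter> R) + card (S - S \<inter> R)"
            using bm_sub[OF bmi finM, of "S \<inter> R" S] SM by auto
          also have "S - S \<inter> R = S \<inter> X" using SM R_def by auto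
          also have "v i (S \<inter> R) \<le> v i R" using bm_mono[OF bmi finM, of "S \<inter> R" R] RM by auto
          finally show "v i S \<le> of_int k + of_int c - 1" using cS k by linarith
        qed
      qed
      have "of_int c < APS M (v i) (b i) / 2 + 1"
        unfolding c_def cc_def by (meson ceiling_correct diff_less_eq)
      then show False using bound kc by linarith
    qed
    have c0: "c \<ge> 0" using cc0 i c_def by simp
    have kk: "real (nat c) \<le> v i R" using key c0 by simp
    have bxi: "binary_XOS M (v i)" using val i by blast
    obtain T where T: "T \<subseteq> R" "v i T = real (card T)" "card T = nat c"
      using xos_sub[OF finM bxi RM kk] by blast
    have T1: "T \<subseteq> M - (\<Union>j<i. A j)" using T(1) unfolding R_def X_def .
    have "real (card T) = of_int c" using T(3) c0 by simp
    then have T3: "real (card T) = of_int \<lceil>APS M (v i) (b i) / 2\<rceil>" unfolding c_def cc_def .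
    show "\<exists>Ai. Ai \<subseteq> M - (\<Union>j<i. A j) \<and> v i Ai = real (card Ai) \<and>
                  real (card Ai) = of_int \<lceil>APS M (v i) (b i) / 2\<rceil>"
      using T1 T(2) T3 by blast
  qed
  have part2: "\<forall>A B. (\<forall>j<n. valid_step M v b A j) \<and> is_allocation M n B \<and> (\<forall>i<n. A i \<subseteq> B i)
            \<longrightarrow> (\<forall>i<n. v i (B i) \<ge> APS M (v i) (b i) / 2)"
  proof (intro allI impI)
    fix A B i assume H: "(\<forall>j<n. valid_step M v b A j) \<and> is_allocation M n B \<and> (\<forall>i<n. A i \<subseteq> B i)"
      and i: "i < n"
    have "APS M (v i) (b i) / 2 \<le> of_int (cc i)" unfolding cc_def by simp
    also have "\<dots> = v i (A i)" using H i by (auto simp: valid_step_def cc_def)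
    also have "\<dots> \<le> v i (B i)" using H i bm_mono[OF bm[OF i] finM, of "A i" "B i"]
      by (auto simp: is_allocation_def)
    finally show "v i (B i) \<ge> APS M (v i) (b i) / 2" .
  qed
  have ex: "k \<le> n \<Longrightarrow> \<exists>A. \<forall>j<k. valid_step M v b A j" for k
  proof (induction k)
    case 0
    then show ?case by simp
  next
    case (Suc k)
    then obtain A where A: "\<forall>j<k. valid_step M v b A j" by auto
    have kn: "k < n" using Suc.prems by simp
    have hA: "\<And>j. j < k \<Longrightarrow> valid_step M v b A j" using A by blast
    obtain Ai where Ai: "Ai \<subseteq> M - (\<Union>j<k. A j)" "v k Ai = real (card Ai)"
      "real (card Ai) = of_int \<lceil>APS M (v k) (b k) / 2\<rceil>"
      using part1[rule_format, OF kn hA] by blast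
    have "valid_step M v b (A(k := Ai)) j" if "j < Suc k" for j
    proof (cases "j < k")
      case True
      have "(\<Union>l<j. (A(k := Ai)) l) = (\<Union>l<j. A l)" using True by auto
      then show ?thesis using A True by (simp add: valid_step_def)
    next
      case False
      then have "j = k" using that by simp
      moreover have "(\<Union>l<k. (A(k := Ai)) l) = (\<Union>l<k. A l)" by auto
      ultimately show ?thesis using Ai by (simp add: valid_step_def)
    qed
    then show ?case by blast
  qed
  obtain A where A: "\<forall>j<n. valid_step M v b A j" using ex by blast
  have n0: "n > 0" using bsum by (cases n) auto
  define U where "U = (\<Union>j<n. A j)"
  define B where "B i = (if i = n - 1 then A i \<union> (M - U) else A i)" for i
  have AM: "A j \<subseteq> M" if "j < n" for j using A that by (auto simp: valid_step_def)
  have Adisj: "A i \<inter> A j = {}" if "i < n" "j < i" for i j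
    using A that by (auto simp: valid_step_def)
  have alloc: "is_allocation M n B"
    unfolding is_allocation_def
  proof (intro conjI allI impI)
    fix i assume "i < n" then show "B i \<subseteq> M" using AM by (auto simp: B_def)
  next
    fix i j assume ij: "i < n" "j < n" "i \<noteq> j"
    have d1: "A i \<inter> A j = {}" using ij Adisj
      by (metis Int_commute linorder_neqE_nat)
    have d2: "A l \<inter> (M - U) = {}" if "l < n" for l using that U_def by auto
    show "B i \<inter> B j = {}" using d1 d2 ij unfolding B_def by auto
  next
    show "(\<Union>i<n. B i) = M"
    proof
      show "(\<Union>i<n. B i) \<subseteq> M" using AM by (auto simp: B_def)
    next
      show "M \<subseteq> (\<Union>i<n. B i)"
      proof
        fix x assume x: "x \<in> M"
        show "x \<in> (\<Union>i<n. B i)"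
        proof (cases "x \<in> U")
          case True
          then obtain j where "j < n" "x \<in> A j" unfolding U_def by auto
          then show ?thesis unfolding B_def by (intro UN_I[of j]) auto
        next
          case False
          then show ?thesis using x n0 unfolding B_def by (intro UN_I[of "n - 1"]) auto
        qed
      qed
    qed
  qed
  have sub: "\<forall>i<n. A i \<subseteq> B i" by (auto simp: B_def)
  have "\<forall>i<n. v i (B i) \<ge> APS M (v i) (b i) / 2"
    using part2[rule_format, OF conjI[OF A conjI[OF alloc sub]]] by blast
  then have part3: "\<exists>B. is_allocation M n B \<and> (\<forall>i<n. v i (B i) \<ge> APS M (v i) (b i) / 2)"
    using alloc by blast
  show ?thesis using part1 part2 part3 by (intro conjI)
qed

end
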